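(* Consider an instance of the bicriteria asymmetric traveling salesman problem (bi-ATSP) with tour set $\mathcal{C}$, vector criterion $D=(D_1,D_2)$ and outcome set $\mathcal{D}=D(\mathcal{C})$. Let $i,j\in\{1,2\}$, $i\neq j$, and suppose criterion $D_i$ is more important than criterion $D_j$ with coefficient of relative importance $\theta\in(0,1)$; let $\hat P(\mathcal{D})$ be the corresponding reduced Pareto set. Suppose there exist tours $C', C'' \in P_D(\mathcal{C})$ with $D_j(C'')\neq D_j(C')$ such that $$\frac{D_i(C') - D_i(C'')}{D_j(C'') - D_j(C')} \geqslant \frac{1 - \theta}{\theta}.$$ Then $|P(\mathcal{D})| - |\hat{P}(\mathcal{D})| \geqslant 1$.
   Context: Bi-ATSP: given a complete directed graph $G=(V,E)$ on $n$ vertices, each arc $e\in E$ carries a weight vector $d(e)=(d_1(e),d_2(e))$ of positive numbers. $\mathcal{C}$ is the set of all $(n-1)!$ Hamiltonian circuits (tours) of $G$, and for a tour $C$, $D(C)=(D_1(C),D_2(C))$ with $D_j(C)=\sum_{e\in C} d_j(e)$. For vectors $y^*,y$, write $y^*\leq y$ if $y^*\neq y$ and $y^*_s\leqslant y_s$ for every coordinate $s$ (Pareto relation). For a vector criterion $F$ on $\mathcal{C}$, the set of pareto-optimal tours is $P_F(\mathcal{C})=\{C\in\mathcal{C}: \nexists C^*\in\mathcal{C},\ F(C^* )\leq F(C)\}$. The Pareto set is $P(\mathcal{D})=\{y\in\mathcal{D}: \nexists y^*\in\mathcal{D},\ y^*\leq y\}$. Reduced Pareto set: if criterion $D_i$ is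 declared more important than criterion $D_j$ ($\{i,j\}=\{1,2\}$) with coefficient of relative importance $\theta\in(0,1)$, define the new criterion $\hat D$ by $\hat D_j=\theta D_i+(1-\theta)D_j$ and $\hat D_i=D_i$, and set $\hat{P}(\mathcal{D})=D(P_{\hat D}(\mathcal{C}))$ (a subset of $P(\mathcal{D})$). *)

theory Defs
  imports Complex_Main
begin

text \<open>Hamiltonian circuits (tours) of the complete digraph on the finite vertex set V,
  each tour represented by its set of arcs.\<close>
definition tours :: "'a set \<Rightarrow> ('a \<times> 'a) set set" where
  "tours V = {C. \<exists>xs. distinct xs \<and> set xs = V \<and>
      C = {(xs ! k, xs ! ((k + 1) mod length xs)) | k. k < length xs}}"

definition Dvec :: "('a \<times> 'a \<Rightarrow> real \<times> real) \<Rightarrow> ('a \<times> 'a) set \<Rightarrow> real \<times> real" where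
  "Dvec d C = ((\<Sum>e\<in>C. fst (d e)), (\<Sum>e\<in>C. snd (d e)))"

definition coord :: "nat \<Rightarrow> real \<times> real \<Rightarrow> real" where
  "coord s y = (if s = 1 then fst y else snd y)"

definition pareto_le :: "real \<times> real \<Rightarrow> real \<times> real \<Rightarrow> bool" where
  "pareto_le y' y \<longleftrightarrow> y' \<noteq> y \<and> fst y' \<le> fst y \<and> snd y' \<le> snd y"

definition pareto_tours :: "('c \<Rightarrow> real \<times> real) \<Rightarrow> 'c set \<Rightarrow> 'c set" where
  "pareto_tours F Cs = {C \<in> Cs. \<not> (\<exists>C'\<in>Cs. pareto_le (F C') (F C))}"

definition pareto_set :: "(real \<times> real) set \<Rightarrow> (real \<times> real) set" where
  "pareto_set Y = {y \<in> Y. \<not> (\<exists>y'\<in>Y. pareto_le y' y)}"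

text \<open>Criterion i more important than j (the other one) with coefficient \<theta>:
  new criterion with hat D_i = D_i, hat D_j = \<theta> D_i + (1-\<theta>) D_j.\<close>
definition reduce :: "real \<Rightarrow> nat \<Rightarrow> real \<times> real \<Rightarrow> real \<times> real" where
  "reduce \<theta> i y = (if i = 1 then (fst y, \<theta> * fst y + (1 - \<theta>) * snd y)
                    else (\<theta> * snd y + (1 - \<theta>) * fst y, snd y))"

definition reduced_pareto_set ::
  "'a set \<Rightarrow> ('a \<times> 'a \<Rightarrow> real \<times> real) \<Rightarrow> real \<Rightarrow> nat \<Rightarrow> (real \<times> real) set" where
  "reduced_pareto_set V d \<theta> i =
     Dvec d ` pareto_tours (\<lambda>C. reduce \<theta> i (Dvec d C)) (tours V)"

end

theory Submission
  imports Defs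
begin

lemma ratio_aux:
  fixes a b x y t :: real
  assumes "y \<noteq> x" "(a - b) / (y - x) \<ge> (1 - t) / t" "0 < t" "t < 1"
  shows "(y > x \<and> b < a \<and> t*b + (1-t)*y \<le> t*a + (1-t)*x) \<or>
         (y < x \<and> a < b \<and> t*a + (1-t)*x \<le> t*b + (1-t)*y)"
proof (cases "y > x")
  case True
  have "(1 - t) / t * (y - x) \<le> (a - b)" using assms True by (simp add: pos_le_divide_eq)
  then have "(1 - t) * (y - x) \<le> t * (a - b)" using assms by (simp add: field_simps)
  moreover have "(1-t)*(y-x) > 0" using True assms by simp
  ultimately have "t * (a - b) > 0" by linarith
  then have "a - b > 0" using assms(3) by (simp add: zero_less_mult_iff)
  then show ?thesis using True assms \<open>(1 - t) * (y - x) \<le> t * (a - b)\<close> by (auto simp: algebra_simps)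
next
  case False
  then have F: "y < x" using assms by simp
  have "(1 - t) / t * (y - x) \<ge> (a - b)" using assms F by (simp add: neg_le_divide_eq)
  then have "(1 - t) * (y - x) \<ge> t * (a - b)" using assms by (simp add: field_simps)
  moreover have "(1-t)*(x-y) > 0" using F assms by simp
  ultimately have "t * (b - a) > 0" by (simp add: algebra_simps)
  then have "b - a > 0" using assms(3) by (simp add: zero_less_mult_iff)
  then show ?thesis using F assms \<open>(1 - t) * (y - x) \<ge> t * (a - b)\<close> by (auto simp: algebra_simps)
qed

lemma reduce_mono:
  assumes "i \<in> {1,2}" "0 < t" "t < 1" "pareto_le y' y"
  shows "pareto_le (reduce t i y') (reduce t i y)"
proof -
  obtain a x where y': "y' = (a,x)" by force
  obtain b z where y: "y = (b,z)" by force
  have h: "a \<le> b" "x \<le> z" "(a,x) \<noteq> (b,z)" using assms(4) y y' by (auto simp: pareto_le_def)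
  have m1: "t*a \<le> t*b" "t*x \<le> t*z" using h assms by auto
  have m2: "(1-t)*a \<le> (1-t)*b" "(1-t)*x \<le> (1-t)*z" using h assms by auto
  have ne: "a \<noteq> b \<or> x \<noteq> z" using h by auto
  have "(1-t)*a \<noteq> (1-t)*b \<or> (1-t)*x \<noteq> (1-t)*z" using ne assms by auto
  then show ?thesis using assms(1) h m1 m2 ne unfolding y y' reduce_def pareto_le_def by auto
qed

lemma key:
  assumes "i \<in> {1,2}" "j \<in> {1,2}" "i \<noteq> j" "0 < t" "t < 1"
    "coord j y2 \<noteq> coord j y1"
    "(coord i y1 - coord i y2) / (coord j y2 - coord j y1) \<ge> (1 - t) / t"
  shows "pareto_le (reduce t i y2) (reduce t i y1) \<or> pareto_le (reduce t i y1) (reduce t i y2)"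
proof -
  obtain a x where y1: "y1 = (a,x)" by force
  obtain b z where y2: "y2 = (b,z)" by force
  show ?thesis
  proof (cases "i = 1")
    case True
    then have "j = 2" using assms by auto
    then show ?thesis using ratio_aux[where a=a and b=b and x=x and y=z and t=t] assms True unfolding y1 y2
      by (auto simp: coord_def reduce_def pareto_le_def)
  next
    case False
    then have "i = 2" "j = 1" using assms by auto
    then show ?thesis using ratio_aux[where a=x and b=z and x=a and y=b and t=t] assms unfolding y1 y2
      by (auto simp: coord_def reduce_def pareto_le_def)
  qed
qed

lemma finite_tours: "finite V \<Longrightarrow> finite (tours V)"
proof -
  assume f: "finite V"
  have "tours V \<subseteq> (\<lambda>xs. {(xs ! k, xs ! ((k + 1) mod length xs)) | k. k < length xs}) ` {xs. set xs \<subseteq> V \<and> length xs \<le> card V}"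
    unfolding tours_def using distinct_card by fastforce
  moreover have "finite {xs. set xs \<subseteq> V \<and> length xs \<le> card V}"
    using finite_lists_length_le[OF f] by simp
  ultimately show ?thesis by (meson finite_surj)
qed

theorem proposition1:
  fixes V :: "'a set" and d :: "'a \<times> 'a \<Rightarrow> real \<times> real"
    and \<theta> :: real and i j :: nat and C' C'' :: "('a \<times> 'a) set"
  assumes "finite V"
    and "\<And>u v. u \<in> V \<Longrightarrow> v \<in> V \<Longrightarrow> u \<noteq> v \<Longrightarrow> fst (d (u, v)) > 0 \<and> snd (d (u, v)) > 0"
    and "i \<in> {1, 2}" and "j \<in> {1, 2}" and "i \<noteq> j"
    and "0 < \<theta>" and "\<theta> < 1"
    and "C' \<in> pareto_tours (Dvec d) (tours V)"
    and "C'' \<in> pareto_tours (Dvec d) (tours V)"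
    and "coord j (Dvec d C'') \<noteq> coord j (Dvec d C')"
    and "(coord i (Dvec d C') - coord i (Dvec d C'')) /
           (coord j (Dvec d C'') - coord j (Dvec d C')) \<ge> (1 - \<theta>) / \<theta>"
  shows "int (card (pareto_set (Dvec d ` tours V)))
           - int (card (reduced_pareto_set V d \<theta> i)) \<ge> 1"
  proof -
  let ?T = "tours V"
  let ?r = "\<lambda>C. reduce \<theta> i (Dvec d C)"
  let ?P = "pareto_set (Dvec d ` ?T)"
  let ?R = "reduced_pareto_set V d \<theta> i"
  have sub: "?R \<subseteq> ?P"
  proof
    fix y assume "y \<in> ?R"
    then obtain C where C: "C \<in> pareto_tours ?r ?T" "y = Dvec d C"
      unfolding reduced_pareto_set_def by auto
    have a: "y \<in> Dvec d ` ?T" using C unfolding pareto_tours_def by auto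
    have b: "\<not> (\<exists>y'\<in>Dvec d ` ?T. pareto_le y' y)"
    proof
      assume "\<exists>y'\<in>Dvec d ` ?T. pareto_le y' y"
      then obtain C1 where "C1 \<in> ?T" "pareto_le (Dvec d C1) (Dvec d C)" using C by auto
      then show False using C reduce_mono[OF assms(3,6,7)] unfolding pareto_tours_def by blast
    qed
    show "y \<in> ?P" using a b unfolding pareto_set_def by blast
  qed
  have "\<exists>C0\<in>{C',C''}. \<exists>C1\<in>?T. pareto_le (?r C1) (?r C0)"
    using key[OF assms(3,4,5,6,7,10,11)] assms(8,9) unfolding pareto_tours_def by blast
  then obtain C0 C1 where C0: "C0 \<in> {C',C''}" "C1 \<in> ?T" "pareto_le (?r C1) (?r C0)" by blast
  have inP: "Dvec d C0 \<in> ?P" using C0(1) assms(8,9)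
    unfolding pareto_tours_def pareto_set_def by auto
  have notR: "Dvec d C0 \<notin> ?R"
  proof
    assume "Dvec d C0 \<in> ?R"
    then obtain C where C: "C \<in> pareto_tours ?r ?T" "Dvec d C0 = Dvec d C"
      unfolding reduced_pareto_set_def by auto
    then show False using C0 unfolding pareto_tours_def by auto
  qed
  have fin: "finite ?P" using finite_tours[OF assms(1)] unfolding pareto_set_def by auto
  have "card ?R < card ?P" using sub inP notR fin by (metis psubset_card_mono psubsetI)
  then show ?thesis by linarith
qed

end
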